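(* Let $X$ be a metric space, $R\ge0$, $K>1$, and let $\alpha\colon S\to X$ be a $\frac1K$-almost isometric $R$-circle. Then $d(\alpha(p),\alpha(q))\ge d_S(p,q)-\frac{K-1}{K}\cdot\frac{|S|}{2}-2R$ for all $p,q\in S$.
   Context: A Riemannian circle $S$ is a circle with its length metric, of length $|S|$. An $R$-circle is a map $\alpha\colon S\to X$ from a Riemannian circle with $d(\alpha(p),\alpha(q))\le d_S(p,q)+R$ for all $p,q\in S$; it is $\frac1K$-almost isometric if $d(\alpha(p),\alpha(\bar p))\ge\frac1K\cdot\frac{|S|}2$ for every pair of antipodal points $p,\bar p\in S$. *)

theory Defs
  imports "HOL-Analysis.Analysis"
begin

text \<open>A Riemannian circle of length L > 0 is modelled by the parameter set {0..<L}
  (arc-length coordinate), with the intrinsic length metric.\<close>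

definition circ_pts :: "real \<Rightarrow> real set" where
  "circ_pts L = {0..<L}"

definition circ_mod :: "real \<Rightarrow> real \<Rightarrow> real" where
  "circ_mod L x = x - L * of_int \<lfloor>x / L\<rfloor>"

definition circ_dist :: "real \<Rightarrow> real \<Rightarrow> real \<Rightarrow> real" where
  "circ_dist L p q = min (circ_mod L (p - q)) (L - circ_mod L (p - q))"

definition circ_antipode :: "real \<Rightarrow> real \<Rightarrow> real" where
  "circ_antipode L p = circ_mod L (p + L / 2)"

definition R_circle :: "real \<Rightarrow> real \<Rightarrow> (real \<Rightarrow> 'a::metric_space) \<Rightarrow> bool" where
  "R_circle L R \<alpha> \<longleftrightarrow>
     (\<forall>p\<in>circ_pts L. \<forall>q\<in>circ_pts L. dist (\<alpha> p) (\<alpha> q) \<le> circ_dist L p q + R)"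

definition almost_isometric :: "real \<Rightarrow> real \<Rightarrow> (real \<Rightarrow> 'a::metric_space) \<Rightarrow> bool" where
  "almost_isometric L c \<alpha> \<longleftrightarrow>
     (\<forall>p\<in>circ_pts L. dist (\<alpha> p) (\<alpha> (circ_antipode L p)) \<ge> c * (L / 2))"

end

theory Submission
  imports Defs
begin

lemma cm_pos: assumes "L > 0" "0 \<le> x" "x < L" shows "circ_mod L x = x"
proof -
  have "\<lfloor>x / L\<rfloor> = 0" using assms by (simp add: floor_eq_iff field_simps)
  thus ?thesis by (simp add: circ_mod_def)
qed

lemma cm_neg: assumes "L > 0" "-L \<le> x" "x < 0" shows "circ_mod L x = x + L"
proof -
  have "\<lfloor>x / L\<rfloor> = -1" using assms by (simp add: floor_eq_iff field_simps)
  thus ?thesis by (simp add: circ_mod_def)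
qed

lemma cd_eq: assumes "L > 0" "p \<in> circ_pts L" "q \<in> circ_pts L"
  shows "circ_dist L p q = min \<bar>p - q\<bar> (L - \<bar>p - q\<bar>)"
  using assms cm_pos[of L "p - q"] cm_neg[of L "p - q"]
  unfolding circ_dist_def circ_pts_def by (cases "p - q \<ge> 0") (auto simp: min_def)

lemma anti_eq: assumes "L > 0" "p \<in> circ_pts L"
  shows "circ_antipode L p = (if p < L/2 then p + L/2 else p - L/2)"
proof -
  have "circ_mod L (p + L/2) = p + L/2" if "p < L/2"
    using cm_pos[of L "p + L/2"] assms that unfolding circ_pts_def by auto
  moreover have "circ_mod L (p + L/2) = p - L/2" if "\<not> p < L/2"
  proof -
    have "\<lfloor>(p + L/2) / L\<rfloor> = 1" using assms that unfolding circ_pts_def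
      by (simp add: floor_eq_iff field_simps)
    thus ?thesis by (simp add: circ_mod_def)
  qed
  ultimately show ?thesis unfolding circ_antipode_def by auto
qed

theorem lemma3p1:
  fixes \<alpha> :: "real \<Rightarrow> 'a::metric_space" and L R K :: real
  assumes "L > 0" and "R \<ge> 0" and "K > 1"
    and "R_circle L R \<alpha>"
    and "almost_isometric L (1 / K) \<alpha>"
  shows "\<forall>p\<in>circ_pts L. \<forall>q\<in>circ_pts L.
           dist (\<alpha> p) (\<alpha> q) \<ge> circ_dist L p q - (K - 1) / K * (L / 2) - 2 * R"
proof (intro ballI)
  fix p q assume p: "p \<in> circ_pts L" and q: "q \<in> circ_pts L"
  define a where "a = circ_antipode L p"
  have a: "a = (if p < L/2 then p + L/2 else p - L/2)" using anti_eq[OF assms(1) p] a_def by simp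
  have ain: "a \<in> circ_pts L" using a p assms(1) unfolding circ_pts_def by auto
  have key: "circ_dist L q a + circ_dist L p q = L/2"
    using cd_eq[OF assms(1) q ain] cd_eq[OF assms(1) p q] a p q assms(1)
    unfolding circ_pts_def by (auto simp: min_def abs_if split: if_splits)
  have h1: "dist (\<alpha> p) (\<alpha> a) \<ge> 1/K * (L/2)" using assms(5) p a_def
    unfolding almost_isometric_def by auto
  have h2: "dist (\<alpha> q) (\<alpha> a) \<le> circ_dist L q a + R" using assms(4) q ain
    unfolding R_circle_def by auto
  have h3: "dist (\<alpha> p) (\<alpha> a) \<le> dist (\<alpha> p) (\<alpha> q) + dist (\<alpha> q) (\<alpha> a)"
    by (rule dist_triangle)
  have e: "(K - 1) / K * (L / 2) = L/2 - 1/K * (L/2)" using assms(3) by (simp add: field_simps)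
  show "dist (\<alpha> p) (\<alpha> q) \<ge> circ_dist L p q - (K - 1) / K * (L / 2) - 2 * R"
    unfolding e using h1 h2 h3 key assms(2) by linarith
qed

end
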